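(* Let $\epsilon>0$, let $G=(S,B,E)$ be a bipartite graph with weights $w:S\to\mathbb{R}_+$ and a fixed arrival order of $B$. Let $j\in S$ and let $G_{-j}$ be obtained from $G$ by deleting $j$. Fix $x\in[0,1]^S$, let $M$ be the matching produced by $\epsilon$-\textsc{Ranking} on $G$ with samples $x$, and $M_{-j}$ the matching produced by $\epsilon$-\textsc{Ranking} on $G_{-j}$ with samples $x$ restricted to $S\setminus\{j\}$. Then \[ w(M_{-j})-\frac{2}{\epsilon}w_j \le w(M)\le w(M_{-j})+w_j. \] Moreover, for every $i\in B$, the utility $u_i$ of $i$ in the run on $G$ is at least its utility in the run on $G_{-j}$.
   Context: Buyers $B$ arrive one at a time in the fixed order, each revealing its neighborhood $N(i)\subseteq S$. $\epsilon$-\textsc{Ranking} with samples $x\in[0,1]^S$: when buyer $i$ arrives, match $i$ to an unmatched $j\in N(i)$ maximizing $w_j(1-e^{x_j-1-\epsilon})$ (leave $i$ unmatched if none exists), with ties broken according to a fixed total order on $S$. For a matching $M$, $w(M)=\sum_{\{i,j\}\in M}w_j$ where $j\in S$. The utility of a buyer $i$ is $u_i=w_j(1-e^{x_j-1-\epsilon})$ if $i$ is matched to $j$, and $u_i=0$ if $i$ is unmatched. *)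

theory Defs
  imports Complex_Main
begin

definition price :: "real \<Rightarrow> ('s \<Rightarrow> real) \<Rightarrow> ('s \<Rightarrow> real) \<Rightarrow> 's \<Rightarrow> real" where
  "price eps w x k = w k * (1 - exp (x k - 1 - eps))"

text \<open>The fixed total order on sellers used for tie-breaking is given by an injective
  rank function rk: among sellers of maximal price, the one with smallest rank wins.\<close>
definition best :: "real \<Rightarrow> ('s \<Rightarrow> real) \<Rightarrow> ('s \<Rightarrow> real) \<Rightarrow> ('s \<Rightarrow> nat) \<Rightarrow> 's set \<Rightarrow> 's" where
  "best eps w x rk A = (THE j. j \<in> A \<and> (\<forall>k\<in>A. k \<noteq> j \<longrightarrow>
      price eps w x k < price eps w x j \<or>
      (price eps w x k = price eps w x j \<and> rk j < rk k)))"

definition ranking_step :: "real \<Rightarrow> ('s \<Rightarrow> real) \<Rightarrow> ('s \<Rightarrow> real) \<Rightarrow> ('s \<Rightarrow> nat) \<Rightarrow> 's set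
    \<Rightarrow> ('b \<Rightarrow> 's set) \<Rightarrow> 'b \<Rightarrow> ('b \<times> 's) set \<Rightarrow> ('b \<times> 's) set" where
  "ranking_step eps w x rk S N i M =
     (let A = {k \<in> N i \<inter> S. k \<notin> snd ` M}
      in if A = {} then M else insert (i, best eps w x rk A) M)"

definition ranking :: "real \<Rightarrow> ('s \<Rightarrow> real) \<Rightarrow> ('s \<Rightarrow> real) \<Rightarrow> ('s \<Rightarrow> nat) \<Rightarrow> 's set
    \<Rightarrow> ('b \<Rightarrow> 's set) \<Rightarrow> 'b list \<Rightarrow> ('b \<times> 's) set" where
  "ranking eps w x rk S N bs = fold (ranking_step eps w x rk S N) bs {}"

definition weight :: "('s \<Rightarrow> real) \<Rightarrow> ('b \<times> 's) set \<Rightarrow> real" where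
  "weight w M = (\<Sum>p\<in>M. w (snd p))"

definition utility :: "real \<Rightarrow> ('s \<Rightarrow> real) \<Rightarrow> ('s \<Rightarrow> real) \<Rightarrow> ('b \<times> 's) set \<Rightarrow> 'b \<Rightarrow> real" where
  "utility eps w x M i = (if \<exists>k. (i, k) \<in> M then price eps w x (THE k. (i, k) \<in> M) else 0)"

end

theory Submission
  imports Defs
begin

definition isbest :: "real \<Rightarrow> ('s \<Rightarrow> real) \<Rightarrow> ('s \<Rightarrow> real) \<Rightarrow> ('s \<Rightarrow> nat) \<Rightarrow> 's set \<Rightarrow> 's \<Rightarrow> bool" where
  "isbest eps w x rk A b \<longleftrightarrow> b \<in> A \<and> (\<forall>k\<in>A. k \<noteq> b \<longrightarrow>
      price eps w x k < price eps w x b \<or>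
      (price eps w x k = price eps w x b \<and> rk b < rk k))"

lemma isbest_uniq: "isbest eps w x rk A b \<Longrightarrow> isbest eps w x rk A b' \<Longrightarrow> b' = b"
  unfolding isbest_def by (metis less_asym order_less_irrefl)

lemma best_eq: "isbest eps w x rk A b \<Longrightarrow> best eps w x rk A = b"
proof -
  assume h: "isbest eps w x rk A b"
  have "best eps w x rk A = (THE b. isbest eps w x rk A b)" unfolding best_def isbest_def by simp
  also have "\<dots> = b" by (rule the_equality[of "isbest eps w x rk A" b, OF h]) (rule isbest_uniq[OF h])
  finally show ?thesis .
qed

lemma best_exists:
  assumes "finite A" "A \<noteq> {}" "inj_on rk A"
  shows "\<exists>b. isbest eps w x rk A b"
proof -
  define m where "m = Max (price eps w x ` A)"
  define T where "T = {k\<in>A. price eps w x k = m}"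
  have "m \<in> price eps w x ` A" unfolding m_def using assms by simp
  then have "T \<noteq> {}" unfolding T_def by auto
  moreover have "finite T" unfolding T_def using assms by simp
  ultimately have "Min (rk ` T) \<in> rk ` T" by simp
  then obtain b where b: "b \<in> T" "rk b = Min (rk ` T)" by auto
  have "isbest eps w x rk A b" unfolding isbest_def
  proof (intro conjI ballI impI)
    show "b \<in> A" using b T_def by auto
    fix k assume k: "k \<in> A" "k \<noteq> b"
    have "price eps w x k \<le> m" unfolding m_def using assms k by simp
    moreover have pb: "price eps w x b = m" using b T_def by auto
    moreover
    { assume "price eps w x k = m"
      then have "k \<in> T" using k T_def by auto
      then have "rk b \<le> rk k" using b \<open>finite T\<close> by simp
      moreover have "rk b \<noteq> rk k" using assms(3) k \<open>b \<in> A\<close> inj_on_def by metis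
      ultimately have "rk b < rk k" by simp }
    ultimately show "price eps w x k < price eps w x b \<or>
      (price eps w x k = price eps w x b \<and> rk b < rk k)" by force
  qed
  then show ?thesis by blast
qed

lemma best_isbest:
  assumes "finite A" "A \<noteq> {}" "inj_on rk A"
  shows "isbest eps w x rk A (best eps w x rk A)"
  using best_exists[OF assms] best_eq by metis


definition inv6 where
"inv6 eps w x S j bs M1 M2 \<longleftrightarrow>
  fst ` M1 \<subseteq> set bs \<and> fst ` M2 \<subseteq> set bs \<and>
  (\<forall>i k k'. (i,k)\<in>M1 \<longrightarrow> (i,k')\<in>M1 \<longrightarrow> k = k') \<and>
  (\<forall>i k k'. (i,k)\<in>M2 \<longrightarrow> (i,k')\<in>M2 \<longrightarrow> k = k') \<and>
  snd ` M1 \<subseteq> S \<and> snd ` M2 \<subseteq> S - {j} \<and> finite M1 \<and> finite M2 \<and>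
  (\<forall>i k. (i,k)\<in>M2 \<longrightarrow> (\<exists>k'. (i,k')\<in>M1 \<and> price eps w x k \<le> price eps w x k')) \<and>
  ((\<exists>a\<in>S. S - snd`M1 = insert a (S - {j} - snd`M2) \<and> a \<notin> S - {j} - snd`M2
      \<and> weight w M1 = weight w M2 + w j - w a \<and> price eps w x a \<le> price eps w x j) \<or>
   (S - snd`M1 = S - {j} - snd`M2 \<and> (weight w M1 = weight w M2 + w j \<or>
      (\<exists>a\<in>S. price eps w x a \<le> price eps w x j \<and> weight w M1 = weight w M2 + w j - w a))))"

lemma weight_insert:
  assumes "finite M" "i \<notin> fst ` M"
  shows "weight w (insert (i,b) M) = weight w M + w b"
proof -
  have "(i,b) \<notin> M" using assms(2) by force
  then show ?thesis unfolding weight_def using assms(1) by simp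
qed

lemma inv6_step:
  assumes inv: "inv6 eps w x S j bs M1 M2" and i: "i \<notin> set bs" and NS: "N i \<subseteq> S"
    and finS: "finite S" and injS: "inj_on rk S"
  shows "inv6 eps w x S j (bs @ [i]) (ranking_step eps w x rk S N i M1)
            (ranking_step eps w x rk (S - {j}) N i M2)"
proof -
  let ?P = "price eps w x"
  define A1 where "A1 = S - snd ` M1"
  define A2 where "A2 = S - {j} - snd ` M2"
  define C1 where "C1 = N i \<inter> A1"
  define C2 where "C2 = N i \<inter> A2"
  have e1: "{k \<in> N i \<inter> S. k \<notin> snd ` M1} = C1" using NS unfolding C1_def A1_def by blast
  have e2: "{k \<in> N i \<inter> (S - {j}). k \<notin> snd ` M2} = C2" using NS unfolding C2_def A2_def by blast
  define b1 where "b1 = best eps w x rk C1"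
  define b2 where "b2 = best eps w x rk C2"
  define M1' where "M1' = (if C1 = {} then M1 else insert (i, b1) M1)"
  define M2' where "M2' = (if C2 = {} then M2 else insert (i, b2) M2)"
  have rs1: "ranking_step eps w x rk S N i M1 = M1'"
    unfolding ranking_step_def Let_def e1 M1'_def b1_def by simp
  have rs2: "ranking_step eps w x rk (S - {j}) N i M2 = M2'"
    unfolding ranking_step_def Let_def e2 M2'_def b2_def by simp
  from inv have f1: "fst ` M1 \<subseteq> set bs" and f2: "fst ` M2 \<subseteq> set bs"
    and fun1: "\<forall>i k k'. (i,k)\<in>M1 \<longrightarrow> (i,k')\<in>M1 \<longrightarrow> k = k'"
    and fun2: "\<forall>i k k'. (i,k)\<in>M2 \<longrightarrow> (i,k')\<in>M2 \<longrightarrow> k = k'"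
    and s1: "snd ` M1 \<subseteq> S" and s2: "snd ` M2 \<subseteq> S - {j}"
    and fin1: "finite M1" and fin2: "finite M2"
    and dom: "\<forall>i k. (i,k)\<in>M2 \<longrightarrow> (\<exists>k'. (i,k')\<in>M1 \<and> ?P k \<le> ?P k')"
    and rel: "(\<exists>a\<in>S. A1 = insert a A2 \<and> a \<notin> A2
      \<and> weight w M1 = weight w M2 + w j - w a \<and> ?P a \<le> ?P j) \<or>
      (A1 = A2 \<and> (weight w M1 = weight w M2 + w j \<or>
      (\<exists>a\<in>S. ?P a \<le> ?P j \<and> weight w M1 = weight w M2 + w j - w a)))"
    apply (unfold inv6_def A1_def A2_def)
    apply (elim conjE, assumption)+
    done
  have i1: "i \<notin> fst ` M1" and i2: "i \<notin> fst ` M2" using f1 f2 i by auto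
  have A21: "A2 \<subseteq> A1" using rel by blast
  have C21: "C2 \<subseteq> C1" unfolding C1_def C2_def using A21 by blast
  have C1S: "C1 \<subseteq> S" unfolding C1_def A1_def by blast
  have C2S: "C2 \<subseteq> S - {j}" unfolding C2_def A2_def by blast
  have finC1: "finite C1" using C1S finS finite_subset by blast
  have finC2: "finite C2" using C2S finS finite_subset by blast
  have injC1: "inj_on rk C1" using C1S injS inj_on_subset by blast
  have injC2: "inj_on rk C2" using C2S injS inj_on_subset by blast
  have bb1: "isbest eps w x rk C1 b1" if "C1 \<noteq> {}"
    unfolding b1_def using best_isbest[OF finC1 that injC1] .
  have bb2: "isbest eps w x rk C2 b2" if "C2 \<noteq> {}"
    unfolding b2_def using best_isbest[OF finC2 that injC2] .
  have same: "b1 = b2" if "C2 \<noteq> {}" "b1 \<in> C2"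
  proof -
    have "isbest eps w x rk C2 b1" using bb1 that C21 unfolding isbest_def by blast
    then show ?thesis using bb2[OF that(1)] isbest_uniq by metis
  qed
  have pb: "?P b2 \<le> ?P b1" if "C2 \<noteq> {}"
  proof -
    have "C1 \<noteq> {}" using that C21 by blast
    have "b2 \<in> C1" using bb2[OF that] C21 unfolding isbest_def by blast
    then show ?thesis using bb1[OF \<open>C1 \<noteq> {}\<close>] unfolding isbest_def by force
  qed
  have b1C1: "b1 \<in> C1" if "C1 \<noteq> {}" using bb1[OF that] unfolding isbest_def by blast
  have b2C2: "b2 \<in> C2" if "C2 \<noteq> {}" using bb2[OF that] unfolding isbest_def by blast
  have P1: "fst ` M1' \<subseteq> set (bs @ [i])" "fst ` M2' \<subseteq> set (bs @ [i])"
    using f1 f2 unfolding M1'_def M2'_def by auto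
  have P2: "\<forall>i k k'. (i,k)\<in>M1' \<longrightarrow> (i,k')\<in>M1' \<longrightarrow> k = k'"
  proof (intro allI impI)
    fix a k k' assume h: "(a,k)\<in>M1'" "(a,k')\<in>M1'"
    have ni: "\<And>k. (i,k) \<notin> M1" using i1 by force
    show "k = k'" using h fun1 ni unfolding M1'_def by (cases "C1 = {}") auto
  qed
  have P3: "\<forall>i k k'. (i,k)\<in>M2' \<longrightarrow> (i,k')\<in>M2' \<longrightarrow> k = k'"
  proof (intro allI impI)
    fix a k k' assume h: "(a,k)\<in>M2'" "(a,k')\<in>M2'"
    have ni: "\<And>k. (i,k) \<notin> M2" using i2 by force
    show "k = k'" using h fun2 ni unfolding M2'_def by (cases "C2 = {}") auto
  qed
  have P4: "snd ` M1' \<subseteq> S" using s1 b1C1 C1S unfolding M1'_def by auto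
  have P5: "snd ` M2' \<subseteq> S - {j}" using s2 b2C2 C2S unfolding M2'_def by auto
  have P6: "finite M1'" "finite M2'" using fin1 fin2 unfolding M1'_def M2'_def by auto
  have P7: "\<forall>i k. (i,k)\<in>M2' \<longrightarrow> (\<exists>k'. (i,k')\<in>M1' \<and> ?P k \<le> ?P k')"
  proof (intro allI impI)
    fix i' k assume ik: "(i',k) \<in> M2'"
    show "\<exists>k'. (i',k')\<in>M1' \<and> ?P k \<le> ?P k'"
    proof (cases "(i',k) \<in> M2")
      case True
      then show ?thesis using dom unfolding M1'_def by (metis insert_iff)
    next
      case False
      then have "C2 \<noteq> {}" "i' = i" "k = b2" using ik unfolding M2'_def by (auto split: if_splits)
      moreover have "C1 \<noteq> {}" using \<open>C2 \<noteq> {}\<close> C21 by blast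
      ultimately show ?thesis using pb unfolding M1'_def by auto
    qed
  qed
  have A1': "S - snd ` M1' = (if C1 = {} then A1 else A1 - {b1})"
    unfolding M1'_def A1_def by auto
  have A2': "S - {j} - snd ` M2' = (if C2 = {} then A2 else A2 - {b2})"
    unfolding M2'_def A2_def by auto
  have W1: "weight w M1' = (if C1 = {} then weight w M1 else weight w M1 + w b1)"
    unfolding M1'_def using weight_insert[OF fin1 i1] by simp
  have W2: "weight w M2' = (if C2 = {} then weight w M2 else weight w M2 + w b2)"
    unfolding M2'_def using weight_insert[OF fin2 i2] by simp
  have P8: "(\<exists>a\<in>S. S - snd`M1' = insert a (S - {j} - snd`M2') \<and> a \<notin> S - {j} - snd`M2'
      \<and> weight w M1' = weight w M2' + w j - w a \<and> ?P a \<le> ?P j) \<or>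
   (S - snd`M1' = S - {j} - snd`M2' \<and> (weight w M1' = weight w M2' + w j \<or>
      (\<exists>a\<in>S. ?P a \<le> ?P j \<and> weight w M1' = weight w M2' + w j - w a)))"
  proof (cases "C1 = {}")
    case True
    then have "C2 = {}" using C21 by blast
    then show ?thesis using rel True A1' A2' W1 W2 by simp
  next
    case C1ne: False
    show ?thesis
    proof (cases "C2 = {}")
      case True
      then have "C1 \<subseteq> A1 - A2" unfolding C1_def C2_def by blast
      then have "\<not> (A1 = A2)" using C1ne by blast
      then obtain a where a: "a \<in> S" "A1 = insert a A2" "a \<notin> A2"
        "weight w M1 = weight w M2 + w j - w a" "?P a \<le> ?P j" using rel by blast
      have "b1 = a" using b1C1[OF C1ne] \<open>C1 \<subseteq> A1 - A2\<close> a by blast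
      then have "S - snd ` M1' = S - {j} - snd ` M2'" "weight w M1' = weight w M2' + w j"
        using A1' A2' W1 W2 True C1ne a by auto
      then show ?thesis by blast
    next
      case C2ne: False
      show ?thesis
      proof (cases "b1 \<in> C2")
        case True
        then have eq: "b1 = b2" using same C2ne by blast
        have b2A2: "b2 \<in> A2" using b2C2[OF C2ne] unfolding C2_def by blast
        show ?thesis
        proof (rule disjE[OF rel])
          assume "\<exists>a\<in>S. A1 = insert a A2 \<and> a \<notin> A2
            \<and> weight w M1 = weight w M2 + w j - w a \<and> ?P a \<le> ?P j"
          then obtain a where a: "a \<in> S" "A1 = insert a A2" "a \<notin> A2"
            "weight w M1 = weight w M2 + w j - w a" "?P a \<le> ?P j" by blast
          have "a \<noteq> b2" using a b2A2 by blast
          then have "S - snd ` M1' = insert a (S - {j} - snd ` M2')" "a \<notin> S - {j} - snd ` M2'"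
            "weight w M1' = weight w M2' + w j - w a"
            using A1' A2' W1 W2 C1ne C2ne a eq by auto
          then show ?thesis using a by blast
        next
          assume "A1 = A2 \<and> (weight w M1 = weight w M2 + w j \<or>
            (\<exists>a\<in>S. ?P a \<le> ?P j \<and> weight w M1 = weight w M2 + w j - w a))"
          then show ?thesis using A1' A2' W1 W2 C1ne C2ne eq by auto
        qed
      next
        case False
        then have "b1 \<in> C1 - C2" using b1C1[OF C1ne] by blast
        then have "b1 \<in> A1 - A2" unfolding C1_def C2_def by blast
        then have "\<not> (A1 = A2)" by blast
        then obtain a where a: "a \<in> S" "A1 = insert a A2" "a \<notin> A2"
          "weight w M1 = weight w M2 + w j - w a" "?P a \<le> ?P j" using rel by blast
        have "b1 = a" using \<open>b1 \<in> A1 - A2\<close> a by blast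
        have b2A2: "b2 \<in> A2" using b2C2[OF C2ne] unfolding C2_def by blast
        have "S - snd ` M1' = insert b2 (S - {j} - snd ` M2')" "b2 \<notin> S - {j} - snd ` M2'"
          "weight w M1' = weight w M2' + w j - w b2"
          using A1' A2' W1 W2 C1ne C2ne a \<open>b1 = a\<close> b2A2 by auto
        moreover have "?P b2 \<le> ?P j" using pb[OF C2ne] \<open>b1 = a\<close> a(5) by (metis order_trans)
        moreover have "b2 \<in> S" using b2C2[OF C2ne] C2S by blast
        ultimately show ?thesis by blast
      qed
    qed
  qed
  show ?thesis unfolding rs1 rs2 inv6_def
    using P1 P2 P3 P4 P5 P6 P7 P8 by blast
qed


lemma inv6_fold:
  assumes "distinct bs" "\<forall>i\<in>set bs. N i \<subseteq> S" "finite S" "inj_on rk S" "j \<in> S"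
  shows "inv6 eps w x S j bs (fold (ranking_step eps w x rk S N) bs {})
           (fold (ranking_step eps w x rk (S - {j}) N) bs {})"
  using assms(1,2)
proof (induction bs rule: rev_induct)
  case Nil
  show ?case unfolding inv6_def weight_def using assms(5) by (auto intro!: disjI1 bexI[of _ j])
next
  case (snoc i bs)
  then have "inv6 eps w x S j bs (fold (ranking_step eps w x rk S N) bs {})
           (fold (ranking_step eps w x rk (S - {j}) N) bs {})" by simp
  moreover have "i \<notin> set bs" "N i \<subseteq> S" using snoc.prems by auto
  ultimately show ?case using inv6_step assms(3,4) by simp
qed

lemma price_bounds:
  assumes "w k \<ge> 0" "x k \<in> {0..1}" "eps > 0"
  shows "0 \<le> price eps w x k" "price eps w x k \<le> w k"
    "w k * (1 - exp (- eps)) \<le> price eps w x k"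
proof -
  have e1: "exp (x k - 1 - eps) \<le> 1" using assms by simp
  have e2: "exp (x k - 1 - eps) \<le> exp (- eps)" using assms by simp
  have e3: "0 < exp (x k - 1 - eps)" by simp
  show "0 \<le> price eps w x k" unfolding price_def using assms(1) e1 by simp
  show "price eps w x k \<le> w k" unfolding price_def using assms(1) e3
    by (simp add: mult_left_le)
  show "w k * (1 - exp (- eps)) \<le> price eps w x k" unfolding price_def
    using assms(1) e2 by (intro mult_left_mono) auto
qed

lemma weight_bound:
  assumes "w a \<ge> 0" "x a \<in> {0..1}" "w j \<ge> 0" "x j \<in> {0..1}" "eps > 0"
    and "price eps w x a \<le> price eps w x j"
  shows "w a \<le> w j + 2 / eps * w j"
proof -
  define q where "q = exp (- eps)"
  have "exp (- eps) * exp eps = 1" by (simp add: exp_add[symmetric])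
  moreover have "1 + eps \<le> exp eps" by simp
  moreover have "q > 0" unfolding q_def by simp
  ultimately have q1: "q * (1 + eps) \<le> 1" unfolding q_def
    by (metis mult_left_mono less_imp_le)
  have h: "w a * (1 - q) \<le> w j" unfolding q_def
    using price_bounds[of w a x eps, OF assms(1,2,5)] price_bounds[of w j x eps, OF assms(3,4,5)] assms(6) by linarith
  have "w a * eps \<le> w a * ((1 - q) * (1 + eps))"
    using q1 assms(1) by (intro mult_left_mono) (auto simp: algebra_simps)
  also have "\<dots> = (w a * (1 - q)) * (1 + eps)" by simp
  also have "\<dots> \<le> w j * (1 + eps)" using h assms(5) by (intro mult_right_mono) auto
  finally have "w a * eps \<le> w j * (1 + eps)" .
  then have "w a \<le> w j * (1 + eps) / eps" using assms(5) by (simp add: field_simps)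
  also have "\<dots> = w j + w j / eps" using assms(5) by (simp add: field_simps)
  also have "\<dots> \<le> w j + 2 / eps * w j" using assms(3,5) by (simp add: field_simps)
  finally show ?thesis .
qed

lemma utility_eq:
  assumes "(i,k) \<in> M" "\<forall>i k k'. (i,k)\<in>M \<longrightarrow> (i,k')\<in>M \<longrightarrow> k = k'"
  shows "utility eps w x M i = price eps w x k"
proof -
  have "(THE k. (i,k) \<in> M) = k" using assms by blast
  then show ?thesis unfolding utility_def using assms(1) by auto
qed

theorem lemma6:
  fixes S :: "'s set" and B :: "'b list" and N :: "'b \<Rightarrow> 's set"
    and w x :: "'s \<Rightarrow> real" and rk :: "'s \<Rightarrow> nat" and eps :: real and j :: 's
  assumes "finite S" and "distinct B" and "\<forall>i\<in>set B. N i \<subseteq> S"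
    and "\<forall>k\<in>S. w k \<ge> 0" and "inj_on rk S" and "eps > 0"
    and "\<forall>k\<in>S. x k \<in> {0..1}" and "j \<in> S"
  defines "M \<equiv> ranking eps w x rk S N B"
    and "Mj \<equiv> ranking eps w x rk (S - {j}) N B"
  shows "weight w Mj - 2 / eps * w j \<le> weight w M \<and> weight w M \<le> weight w Mj + w j
    \<and> (\<forall>i\<in>set B. utility eps w x Mj i \<le> utility eps w x M i)"
proof -
  have inv: "inv6 eps w x S j B M Mj"
    unfolding M_def Mj_def ranking_def by (rule inv6_fold[OF assms(2,3,1,5,8)])
  from inv have fun1: "\<forall>i k k'. (i,k)\<in>M \<longrightarrow> (i,k')\<in>M \<longrightarrow> k = k'"
    and fun2: "\<forall>i k k'. (i,k)\<in>Mj \<longrightarrow> (i,k')\<in>Mj \<longrightarrow> k = k'"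
    and s1: "snd ` M \<subseteq> S"
    and dom: "\<forall>i k. (i,k)\<in>Mj \<longrightarrow> (\<exists>k'. (i,k')\<in>M \<and> price eps w x k \<le> price eps w x k')"
    and W: "(\<exists>a\<in>S. S - snd`M = insert a (S - {j} - snd`Mj) \<and> a \<notin> S - {j} - snd`Mj
      \<and> weight w M = weight w Mj + w j - w a \<and> price eps w x a \<le> price eps w x j) \<or>
      (S - snd`M = S - {j} - snd`Mj \<and> (weight w M = weight w Mj + w j \<or>
      (\<exists>a\<in>S. price eps w x a \<le> price eps w x j \<and> weight w M = weight w Mj + w j - w a)))"
    apply (unfold inv6_def)
    apply (elim conjE, assumption)+
    done
  have W2: "(\<exists>a\<in>S. weight w M = weight w Mj + w j - w a \<and> price eps w x a \<le> price eps w x j) \<or>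
       weight w M = weight w Mj + w j"
    using W by (elim disjE conjE bexE) blast+
  have wj: "0 \<le> w j + 2 / eps * w j" using assms(4,6,8) by simp
  have key: "\<And>a. a \<in> S \<Longrightarrow> price eps w x a \<le> price eps w x j \<Longrightarrow>
        0 \<le> w a \<and> w a \<le> w j + 2 / eps * w j"
  proof -
    fix a assume "a \<in> S" "price eps w x a \<le> price eps w x j"
    then show "0 \<le> w a \<and> w a \<le> w j + 2 / eps * w j"
      using weight_bound[of w a x j eps] assms(4,6,7,8) by blast
  qed
  have rel: "\<exists>c. weight w M = weight w Mj + w j - c \<and> 0 \<le> c \<and> c \<le> w j + 2 / eps * w j"
    using W2
  proof
    assume "\<exists>a\<in>S. weight w M = weight w Mj + w j - w a \<and> price eps w x a \<le> price eps w x j"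
    then show ?thesis using key by blast
  next
    assume "weight w M = weight w Mj + w j"
    then show ?thesis using wj by (intro exI[of _ 0]) simp
  qed
  have util: "\<forall>i\<in>set B. utility eps w x Mj i \<le> utility eps w x M i"
  proof
    fix i assume "i \<in> set B"
    show "utility eps w x Mj i \<le> utility eps w x M i"
    proof (cases "\<exists>k. (i,k) \<in> Mj")
      case True
      then obtain k where k: "(i,k) \<in> Mj" by blast
      then obtain k' where k': "(i,k') \<in> M" "price eps w x k \<le> price eps w x k'" using dom by blast
      show ?thesis using utility_eq[OF k fun2] utility_eq[OF k'(1) fun1] k'(2) by simp
    next
      case False
      then have "utility eps w x Mj i = 0" unfolding utility_def by simp
      moreover have "0 \<le> utility eps w x M i"
      proof (cases "\<exists>k. (i,k) \<in> M")
        case True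
        then obtain k where k: "(i,k) \<in> M" by blast
        then have "k \<in> S" using s1 by force
        then have "0 \<le> price eps w x k" using price_bounds(1)[of w k x eps] assms(4,6,7) by blast
        then show ?thesis using utility_eq[OF k fun1, of eps w x] by simp
      next
        case False
        then show ?thesis unfolding utility_def by simp
      qed
      ultimately show ?thesis by simp
    qed
  qed
  from rel obtain c where "weight w M = weight w Mj + w j - c" "0 \<le> c" "c \<le> w j + 2 / eps * w j"
    by blast
  then show ?thesis using util by linarith
qed

end
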